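(* Let $d\ge3$ be an integer, $p_1,\dots,p_d\in(0,1)$, and let $J^d$ be the first rencontre-time of $d$ independent Bernoulli sequences with these parameters (see context). For $0\le x<1$ let $\varphi_d(x)=\sum_{n=1}^\infty P(R^d_n)x^n$ and $\varphi_d(1-)=\lim_{x\to1-}\varphi_d(x)$. Then: in the case $d=3$, if $p_1=p_2=p_3$ then $\varphi_3(1-)=\infty$ and $P(J^3=\infty)=0$ (a rencontre happens almost surely); if $p_1,p_2,p_3$ are not all equal then $\varphi_3(1-)<\infty$ and $P(J^3=\infty)>0$. In the case $d\ge4$, $\varphi_d(1-)<\infty$ regardless of the values of $p_1,\dots,p_d$, and $P(J^d=\infty)>0$.
   Context: Let $d\ge2$ be an integer and $p_1,\dots,p_d\in(0,1)$. Let $\{X^j_k\}_{k\ge1}$, $j=1,\dots,d$, be independent sequences, the $j$-th consisting of i.i.d. Bernoulli random variables with success parameter $p_j$ (all $X^j_k$ mutually independent). Set $S^j(n)=\sum_{i=1}^n X^j_i$. For $n\ge1$, $R^d_n$ denotes the event $\{S^1(n)=S^2(n)=\dots=S^d(n)\}$ (a "rencontre at time $n$"), and $J^d=\inf\{n\ge1:R^d_n \text{ occurs}\}$ with $\inf\emptyset=\infty$. *)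

theory Defs
  imports "HOL-Probability.Probability"
begin

text \<open>X j k: the k-th Bernoulli variable (k \<ge> 1) of the j-th sequence (1 \<le> j \<le> d),
  a boolean random variable (True = success).\<close>

definition partial_sum :: "(nat \<Rightarrow> nat \<Rightarrow> 'a \<Rightarrow> bool) \<Rightarrow> nat \<Rightarrow> nat \<Rightarrow> 'a \<Rightarrow> nat" where
  "partial_sum X j n \<omega> = (\<Sum>i\<in>{1..n}. of_bool (X j i \<omega>))"

definition rencontre :: "'a measure \<Rightarrow> (nat \<Rightarrow> nat \<Rightarrow> 'a \<Rightarrow> bool) \<Rightarrow> nat \<Rightarrow> nat \<Rightarrow> 'a set" where
  "rencontre M X d n = {\<omega> \<in> space M. \<forall>j\<in>{1..d}. partial_sum X j n \<omega> = partial_sum X 1 n \<omega>}"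

definition no_rencontre :: "'a measure \<Rightarrow> (nat \<Rightarrow> nat \<Rightarrow> 'a \<Rightarrow> bool) \<Rightarrow> nat \<Rightarrow> 'a set" where
  "no_rencontre M X d = {\<omega> \<in> space M. \<forall>n\<ge>1. \<omega> \<notin> rencontre M X d n}"

definition phi :: "'a measure \<Rightarrow> (nat \<Rightarrow> nat \<Rightarrow> 'a \<Rightarrow> bool) \<Rightarrow> nat \<Rightarrow> real \<Rightarrow> real" where
  "phi M X d x = (\<Sum>n. measure M (rencontre M X d (Suc n)) * x ^ Suc n)"

end

theory Submission
  imports Defs "HOL-Probability.Probability"
begin

definition bn :: "nat \<Rightarrow> real \<Rightarrow> nat \<Rightarrow> real" where
  "bn n p c = real (n choose c) * p ^ c * (1 - p) ^ (n - c)"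

lemma bn_pmf: "0 \<le> p \<Longrightarrow> p \<le> 1 \<Longrightarrow> bn n p c = pmf (binomial_pmf n p) c"
  by (simp add: bn_def)

lemma bn_nonneg: "0 \<le> p \<Longrightarrow> p \<le> 1 \<Longrightarrow> 0 \<le> bn n p c"
  by (simp add: bn_def)

lemma bn_zero: "n < c \<Longrightarrow> bn n p c = 0"
  by (simp add: bn_def)

lemma bn_sum_le1:
  assumes "0 \<le> p" "p \<le> 1" "finite A"
  shows "(\<Sum>c\<in>A. bn n p c) \<le> 1"
proof -
  have "(\<Sum>c\<in>A. bn n p c) = measure (measure_pmf (binomial_pmf n p)) A"
    using assms by (simp add: measure_measure_pmf_finite bn_pmf)
  also have "\<dots> \<le> 1" by simp
  finally show ?thesis .
qed

lemma bn_le1: "0 \<le> p \<Longrightarrow> p \<le> 1 \<Longrightarrow> bn n p c \<le> 1"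
  using bn_sum_le1[of p "{c}" n] by simp

lemma bn_sum_all: "(\<Sum>c\<le>n. bn n p c) = 1"
  using binomial_ring[of p "1 - p" n] by (simp add: bn_def mult_ac)

lemma choose_ratio: "(n choose Suc c) * Suc c = (n choose c) * (n - c)"
  using binomial_absorption[of c n] binomial_absorb_comp[of n c] by (simp add: mult_ac)

lemma bn_ratio:
  assumes "c < n"
  shows "bn n p (Suc c) * (real c + 1) * (1 - p) = bn n p c * (real n - real c) * p"
proof -
  have e: "real (n choose Suc c) * (real c + 1) = real (n choose c) * (real n - real c)"
    using choose_ratio[of n c] assms by (metis of_nat_Suc of_nat_diff of_nat_mult less_imp_le add.commute)
  have nc: "n - c = Suc (n - Suc c)" using assms by simp
  have "bn n p (Suc c) * (real c + 1) * (1 - p) = (real (n choose Suc c) * (real c + 1)) * p * (p ^ c * ((1 - p) ^ (n - Suc c) * (1 - p)))"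
    unfolding bn_def by (simp only: power_Suc) (simp only: mult_ac)
  also have "(1 - p) ^ (n - Suc c) * (1 - p) = (1 - p) ^ (n - c)"
    unfolding nc by (simp only: power_Suc mult.commute)
  also note e
  finally show ?thesis unfolding bn_def by (simp only: mult_ac)
qed

lemma bn_ratio_lower:
  assumes p: "0 < p" "p < 1" and k: "real k \<le> real n * p"
    and s: "real (Suc t) \<le> real n * p * (1 - p)"
  shows "bn n p (Suc (k + t)) \<ge> (1 - real (Suc t) / (real n * p * (1 - p))) * bn n p (k + t)"
proof -
  define c where "c = k + t"
  define A where "A = real n * p * (1 - p)"
  define sr where "sr = real (Suc t)"
  have q: "0 < 1 - p" using p by simp
  have A: "A > 0" using s unfolding A_def by (smt (verit) of_nat_0_le_iff of_nat_Suc)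
  have n0: "real n > 0"
  proof (rule ccontr)
    assume "\<not> real n > 0" hence "n = 0" by simp
    thus False using A unfolding A_def by simp
  qed
  have cn: "c < n"
  proof (rule ccontr)
    assume "\<not> c < n"
    hence "real t \<ge> real n - real k" unfolding c_def by simp
    hence "real t \<ge> real n * (1 - p)" using k by (simp add: algebra_simps)
    moreover have "real n * (1 - p) \<ge> A" unfolding A_def using p n0
      by (simp add: mult_left_le_one_le mult.assoc mult.commute[of p])
    ultimately show False using s unfolding A_def by simp
  qed
  have r: "bn n p (Suc c) * (real c + 1) * (1 - p) = bn n p c * (real n - real c) * p"
    by (rule bn_ratio[OF cn])
  have f1: "1 - sr / A \<ge> 0" using s A unfolding A_def sr_def by simp
  have c1: "real c + 1 \<le> real n * p + sr" unfolding c_def sr_def using k by simp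
  have c2: "real n - real c \<ge> real n * (1 - p) - sr + 1" unfolding c_def sr_def using k by (simp add: algebra_simps)
  have key: "(real n - real c) * p \<ge> (1 - sr / A) * ((real c + 1) * (1 - p))"
  proof -
    have "(1 - sr / A) * ((real c + 1) * (1 - p)) \<le> (1 - sr / A) * ((real n * p + sr) * (1 - p))"
      using f1 c1 q by (intro mult_left_mono mult_right_mono) auto
    also have "\<dots> = real n * p * (1 - p) + sr * (1 - p) - sr - sr^2 / (real n * p)"
      unfolding A_def using p q n0 by (simp add: field_simps power2_eq_square)
    also have "\<dots> \<le> (real n * (1 - p) - sr + 1) * p"
    proof -
      have "sr^2 / (real n * p) \<ge> 0" using p n0 by simp
      thus ?thesis by (simp add: algebra_simps) (use p in linarith)
    qed
    also have "\<dots> \<le> (real n - real c) * p" using c2 p by (intro mult_right_mono) auto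
    finally show ?thesis .
  qed
  have b0: "bn n p c \<ge> 0" using p by (simp add: bn_nonneg)
  have "(1 - sr / A) * bn n p c * ((real c + 1) * (1 - p)) \<le> bn n p (Suc c) * ((real c + 1) * (1 - p))"
  proof -
    have "(1 - sr / A) * bn n p c * ((real c + 1) * (1 - p)) = bn n p c * ((1 - sr / A) * ((real c + 1) * (1 - p)))"
      by (simp add: mult_ac)
    also have "\<dots> \<le> bn n p c * ((real n - real c) * p)" using key b0 by (intro mult_left_mono) auto
    also have "\<dots> = bn n p (Suc c) * ((real c + 1) * (1 - p))" using r by (simp add: mult_ac)
    finally show ?thesis .
  qed
  hence "(1 - sr / A) * bn n p c \<le> bn n p (Suc c)"
    by (rule mult_right_le_imp_le) (use q in \<open>auto intro!: mult_pos_pos\<close>)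
  thus ?thesis unfolding c_def sr_def A_def .
qed


lemma bn_iter:
  assumes p: "0 < p" "p < 1" and k: "real k \<le> real n * p"
  shows "real i \<le> real n * p * (1 - p) \<Longrightarrow>
    bn n p (k + i) \<ge> (1 - real i * (real i + 1) / (2 * (real n * p * (1 - p)))) * bn n p k"
proof (induction i)
  case 0 thus ?case by simp
next
  case (Suc i)
  define A where "A = real n * p * (1 - p)"
  have "real (Suc i) > 0" by simp
  hence A: "A > 0" using Suc.prems unfolding A_def by linarith
  have IH: "bn n p (k + i) \<ge> (1 - real i * (real i + 1) / (2 * A)) * bn n p k"
    using Suc by (simp add: A_def)
  have st: "bn n p (Suc (k + i)) \<ge> (1 - real (Suc i) / A) * bn n p (k + i)"
    using bn_ratio_lower[OF p k, of i] Suc.prems by (simp add: A_def)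
  have f: "1 - real (Suc i) / A \<ge> 0" using Suc.prems A by (simp add: A_def)
  have b0: "bn n p k \<ge> 0" using p by (simp add: bn_nonneg)
  have "(1 - real (Suc i) * (real (Suc i) + 1) / (2 * A)) * bn n p k
      \<le> (1 - real (Suc i) / A) * ((1 - real i * (real i + 1) / (2 * A)) * bn n p k)"
  proof -
    have "(1 - real (Suc i) / A) * (1 - real i * (real i + 1) / (2 * A))
        = 1 - real (Suc i) * (real (Suc i) + 1) / (2 * A) + (real (Suc i) / A) * (real i * (real i + 1) / (2 * A))"
      using A by (simp add: field_simps)
    moreover have "(real (Suc i) / A) * (real i * (real i + 1) / (2 * A)) \<ge> 0" using A by simp
    ultimately have "(1 - real (Suc i) * (real (Suc i) + 1) / (2 * A)) \<le> (1 - real (Suc i) / A) * (1 - real i * (real i + 1) / (2 * A))"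
      by linarith
    thus ?thesis using b0 by (simp add: mult.assoc[symmetric] mult_right_mono)
  qed
  also have "\<dots> \<le> (1 - real (Suc i) / A) * bn n p (k + i)"
    using IH f by (intro mult_left_mono) auto
  also have "\<dots> \<le> bn n p (k + Suc i)" using st by simp
  finally show ?case by (simp add: A_def)
qed

lemma bn_max_aux:
  assumes p: "0 < p" "p < 1" and k: "real k \<le> real n * p"
    and m: "m \<ge> 1" "real m ^ 2 \<le> real n * p * (1 - p)"
  shows "bn n p k \<le> 2 / real m"
proof -
  define A where "A = real n * p * (1 - p)"
  have "real m ^ 2 \<ge> 1" using m(1) by simp
  hence A: "A > 0" using m(2) unfolding A_def by linarith
  have half: "bn n p (k + i) \<ge> bn n p k / 2" if i: "i < m" for i
  proof -
    have "real i + 1 \<le> real m" using i by linarith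
    have ii: "real i * (real i + 1) \<le> real m ^ 2"
      using i by (simp add: power2_eq_square mult_mono)
    have "i \<le> i * (i + 1)" by simp
    hence "real i \<le> real i * (real i + 1)" by (metis of_nat_1 of_nat_add of_nat_mono of_nat_mult)
    hence iA: "real i \<le> A" using ii m(2) unfolding A_def by linarith
    have "bn n p (k + i) \<ge> (1 - real i * (real i + 1) / (2 * A)) * bn n p k"
      using bn_iter[OF p k iA[unfolded A_def]] by (simp add: A_def)
    moreover have "real i * (real i + 1) / (2 * A) \<le> 1 / 2"
      using ii m(2) A unfolding A_def[symmetric] by (simp add: field_simps)
    moreover have "bn n p k \<ge> 0" using p by (simp add: bn_nonneg)
    ultimately have "(1 - real i * (real i + 1) / (2 * A)) * bn n p k \<ge> (1/2) * bn n p k"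
      by (intro mult_right_mono) auto
    with \<open>bn n p (k + i) \<ge> _\<close> show ?thesis by simp
  qed
  have "real m * (bn n p k / 2) = (\<Sum>i<m. bn n p k / 2)" by simp
  also have "\<dots> \<le> (\<Sum>i<m. bn n p (k + i))" using half by (intro sum_mono) auto
  also have "\<dots> = (\<Sum>c\<in>(\<lambda>i. k + i) ` {..<m}. bn n p c)"
    by (subst sum.reindex) (auto simp: inj_on_def)
  also have "\<dots> \<le> 1" using p by (intro bn_sum_le1) auto
  finally have "real m * bn n p k \<le> 2" by simp
  thus ?thesis using m by (simp add: field_simps)
qed

lemma bn_sym: "k \<le> n \<Longrightarrow> bn n p k = bn n (1 - p) (n - k)"
  unfolding bn_def by (simp add: binomial_symmetric[symmetric] mult_ac)

lemma bn_max:
  assumes p: "0 < p" "p < 1"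
    and m: "m \<ge> 1" "real m ^ 2 \<le> real n * p * (1 - p)"
  shows "bn n p k \<le> 2 / real m"
proof (cases "k \<le> n")
  case False thus ?thesis by (simp add: bn_zero)
next
  case True
  show ?thesis
  proof (cases "real k \<le> real n * p")
    case True thus ?thesis using bn_max_aux[OF p True m] by simp
  next
    case False
    have "real (n - k) \<le> real n * (1 - p)" using False \<open>k \<le> n\<close> by (simp add: algebra_simps)
    moreover have "real m ^ 2 \<le> real n * (1 - p) * (1 - (1 - p))" using m by (simp add: mult_ac)
    ultimately have "bn n (1 - p) (n - k) \<le> 2 / real m"
      using p by (intro bn_max_aux m) auto
    thus ?thesis using bn_sym[OF \<open>k \<le> n\<close>] by simp
  qed
qed

lemma bn_unif:
  assumes p: "0 < p" "p < 1" and n: "n \<ge> 1"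
  shows "bn n p k \<le> (4 / sqrt (p * (1 - p))) / sqrt (real n)"
proof -
  define A where "A = real n * p * (1 - p)"
  have pq: "p * (1 - p) > 0" using p by simp
  have sA: "sqrt A = sqrt (p * (1 - p)) * sqrt (real n)"
    unfolding A_def by (simp add: real_sqrt_mult mult_ac)
  have rhs: "(4 / sqrt (p * (1 - p))) / sqrt (real n) = 4 / sqrt A"
    using sA by simp
  have A0: "A > 0" unfolding A_def using pq n by (simp add: mult.assoc)
  show ?thesis
  proof (cases "A \<ge> 4")
    case False
    have "sqrt A \<le> sqrt 4" using False by (intro real_sqrt_le_mono) simp
    hence "sqrt A \<le> 2" by simp
    hence "4 / sqrt A \<ge> 1" using A0 by (simp add: field_simps)
    moreover have "bn n p k \<le> 1" using p by (simp add: bn_le1)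
    ultimately show ?thesis using rhs by simp
  next
    case True
    define m where "m = nat \<lfloor>sqrt A\<rfloor>"
    have "sqrt A \<ge> sqrt 4" using True by (intro real_sqrt_le_mono) simp
    hence s2: "sqrt A \<ge> 2" by simp
    have "\<lfloor>sqrt A\<rfloor> \<ge> 0" using A0 by simp
    hence mr: "real m = of_int \<lfloor>sqrt A\<rfloor>" unfolding m_def by simp
    have m1: "real m > sqrt A - 1" "real m \<le> sqrt A" using mr by linarith+
    have "m \<ge> 1" using m1 s2 by linarith
    moreover have "real m ^ 2 \<le> (sqrt A) ^ 2" using m1 by (intro power_mono) auto
    hence "real m ^ 2 \<le> A" using A0 by simp
    ultimately have "bn n p k \<le> 2 / real m" using bn_max[OF p] unfolding A_def by blast
    also have "\<dots> \<le> 4 / sqrt A"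
    proof -
      have "real m \<ge> sqrt A / 2" using m1 s2 by linarith
      hence "sqrt A \<le> 2 * real m" by simp
      hence "4 / (2 * real m) \<le> 4 / sqrt A" using s2 A0 by (intro divide_left_mono) (auto intro!: mult_pos_pos)
      thus ?thesis by simp
    qed
    finally show ?thesis using rhs by simp
  qed
qed


lemma bn_gen: "(\<Sum>c\<le>n. bn n p c * z ^ c) = (p * z + (1 - p)) ^ n"
  unfolding bn_def binomial_ring by (intro sum.cong) (auto simp: power_mult_distrib mult_ac)

lemma pair_le_gen:
  assumes pa: "0 \<le> pa" "pa \<le> 1" and pb: "0 \<le> pb" "pb \<le> 1" and z: "z > 0"
  shows "(\<Sum>c\<le>n. bn n pa c * bn n pb c) \<le> ((pa * z + (1 - pa)) * (pb / z + (1 - pb))) ^ n"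
proof -
  have "(\<Sum>c\<le>n. bn n pa c * bn n pb c) = (\<Sum>c\<le>n. (bn n pa c * z ^ c) * (bn n pb c * (1/z) ^ c))"
    using z by (intro sum.cong) (auto simp: power_one_over field_simps)
  also have "\<dots> \<le> (\<Sum>c\<le>n. (bn n pa c * z ^ c) * (\<Sum>c'\<le>n. bn n pb c' * (1/z) ^ c'))"
  proof (intro sum_mono mult_left_mono)
    fix c assume c: "c \<in> {..n}"
    show "bn n pb c * (1 / z) ^ c \<le> (\<Sum>c'\<le>n. bn n pb c' * (1 / z) ^ c')"
      using c pb z by (intro member_le_sum) (auto intro!: mult_nonneg_nonneg bn_nonneg)
    show "0 \<le> bn n pa c * z ^ c" using pa z by (auto intro!: mult_nonneg_nonneg bn_nonneg)
  qed
  also have "\<dots> = (\<Sum>c\<le>n. bn n pa c * z ^ c) * (\<Sum>c'\<le>n. bn n pb c' * (1/z) ^ c')"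
    by (simp add: sum_distrib_right)
  also have "\<dots> = (pa * z + (1 - pa)) ^ n * (pb * (1/z) + (1 - pb)) ^ n"
    by (simp only: bn_gen)
  also have "\<dots> = ((pa * z + (1 - pa)) * (pb / z + (1 - pb))) ^ n"
    by (simp add: power_mult_distrib)
  finally show ?thesis .
qed

lemma chernoff_lt:
  assumes pa: "0 < pa" "pa < 1" and pb: "0 < pb" "pb < 1" and lt: "pa < pb"
  shows "\<exists>\<rho>. 0 \<le> \<rho> \<and> \<rho> < 1 \<and> (\<forall>n. (\<Sum>c\<le>n. bn n pa c * bn n pb c) \<le> \<rho> ^ n)"
proof -
  define r where "r = (1 - pa) * pb / (pa * (1 - pb))"
  have den: "pa * (1 - pb) > 0" using pa pb by simp
  have "(1 - pa) * pb > pa * (1 - pb)" using lt pa pb by (simp add: algebra_simps)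
  hence r1: "r > 1" unfolding r_def using den by simp
  define z where "z = (1 + r) / 2"
  have z: "z > 1" "z < r" using r1 unfolding z_def by auto
  define \<rho> where "\<rho> = (pa * z + (1 - pa)) * (pb / z + (1 - pb))"
  have eq: "\<rho> - 1 = (z - 1) * (pa * (1 - pb) - (1 - pa) * pb / z)"
    unfolding \<rho>_def using z by (simp add: field_simps)
  have "pa * (1 - pb) * z < (1 - pa) * pb"
    using z(2) den unfolding r_def by (simp add: field_simps)
  hence "pa * (1 - pb) < (1 - pa) * pb / z" using z by (simp add: field_simps)
  hence "\<rho> - 1 < 0" unfolding eq using z by (intro mult_pos_neg) auto
  moreover have "\<rho> \<ge> 0" unfolding \<rho>_def using pa pb z by (intro mult_nonneg_nonneg) auto
  moreover have "\<forall>n. (\<Sum>c\<le>n. bn n pa c * bn n pb c) \<le> \<rho> ^ n"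
    using pair_le_gen[of pa pb z] pa pb z unfolding \<rho>_def by auto
  ultimately show ?thesis by (intro exI[of _ \<rho>]) auto
qed

lemma chernoff:
  assumes pa: "0 < pa" "pa < 1" and pb: "0 < pb" "pb < 1" and ne: "pa \<noteq> pb"
  shows "\<exists>\<rho>. 0 \<le> \<rho> \<and> \<rho> < 1 \<and> (\<forall>n. (\<Sum>c\<le>n. bn n pa c * bn n pb c) \<le> \<rho> ^ n)"
proof (cases "pa < pb")
  case True thus ?thesis using chernoff_lt[OF pa pb] by blast
next
  case False
  hence "pb < pa" using ne by simp
  thus ?thesis using chernoff_lt[OF pb pa] by (simp add: mult.commute)
qed


lemma holder3:
  fixes b :: "nat \<Rightarrow> real"
  assumes W: "finite W" and b: "\<And>c. c \<in> W \<Longrightarrow> b c \<ge> 0"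
  shows "(\<Sum>c\<in>W. b c) ^ 3 \<le> real (card W) ^ 2 * (\<Sum>c\<in>W. b c ^ 3)"
proof -
  define S1 where "S1 = (\<Sum>c\<in>W. b c)"
  define S2 where "S2 = (\<Sum>c\<in>W. b c ^ 2)"
  define S3 where "S3 = (\<Sum>c\<in>W. b c ^ 3)"
  have S1: "S1 \<ge> 0" unfolding S1_def using b by (simp add: sum_nonneg)
  have S2: "S2 \<ge> 0" unfolding S2_def by (simp add: sum_nonneg)
  have S3: "S3 \<ge> 0" unfolding S3_def using b by (simp add: sum_nonneg)
  have cs1: "S1 ^ 2 \<le> real (card W) * S2"
    using Cauchy_Schwarz_ineq_sum[of "\<lambda>_. 1" b W] unfolding S1_def S2_def by simp
  have cs2: "S2 ^ 2 \<le> S1 * S3"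
  proof -
    have "S2 = (\<Sum>c\<in>W. sqrt (b c) * (sqrt (b c) * b c))"
      unfolding S2_def using b by (intro sum.cong) (auto simp: power2_eq_square mult.assoc[symmetric])
    hence "S2 ^ 2 \<le> (\<Sum>c\<in>W. (sqrt (b c))^2) * (\<Sum>c\<in>W. (sqrt (b c) * b c)^2)"
      using Cauchy_Schwarz_ineq_sum[of "\<lambda>c. sqrt (b c)" "\<lambda>c. sqrt (b c) * b c" W] by simp
    also have "(\<Sum>c\<in>W. (sqrt (b c))^2) = S1" unfolding S1_def using b by (intro sum.cong) auto
    also have "(\<Sum>c\<in>W. (sqrt (b c) * b c)^2) = S3" unfolding S3_def using b
      by (intro sum.cong) (auto simp: power_mult_distrib power3_eq_cube power2_eq_square)
    finally show ?thesis .
  qed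
  show ?thesis
  proof (cases "S1 = 0")
    case True thus ?thesis using S3 unfolding S1_def[symmetric] S3_def[symmetric] by simp
  next
    case False
    hence S1p: "S1 > 0" using S1 by simp
    have "S1 ^ 4 = (S1 ^ 2) ^ 2" by simp
    also have "\<dots> \<le> (real (card W) * S2) ^ 2" using cs1 S1 by (intro power_mono) auto
    also have "\<dots> = real (card W) ^ 2 * S2 ^ 2" by (simp add: power_mult_distrib)
    also have "\<dots> \<le> real (card W) ^ 2 * (S1 * S3)" using cs2 by (intro mult_left_mono) auto
    finally have "S1 * S1 ^ 3 \<le> S1 * (real (card W) ^ 2 * S3)"
      by (simp add: power_numeral_reduce mult_ac)
    hence "S1 ^ 3 \<le> real (card W) ^ 2 * S3" using S1p by simp
    thus ?thesis unfolding S1_def S3_def .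
  qed
qed

lemma window_card:
  fixes n :: nat and x e :: real
  assumes e: "e \<ge> 0"
  shows "card {c \<in> {..n}. \<bar>real c - x\<bar> < e} \<le> 2 * e + 1"
proof -
  define a where "a = nat \<lceil>x - e\<rceil>"
  define K where "K = nat \<lceil>2 * e\<rceil>"
  have sub: "{c \<in> {..n}. \<bar>real c - x\<bar> < e} \<subseteq> {a..<a + K}"
  proof
    fix c assume "c \<in> {c \<in> {..n}. \<bar>real c - x\<bar> < e}"
    hence c1: "real c \<ge> x - e" and c2: "real c < x + e" by auto
    have "x - e \<le> of_int (int c)" using c1 by simp
    hence "\<lceil>x - e\<rceil> \<le> int c" by (rule ceiling_le)
    hence ca: "a \<le> c" unfolding a_def by (simp only: nat_le_iff)
    have "real c < real a + 2 * e"
    proof (cases "\<lceil>x - e\<rceil> \<ge> 0")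
      case True
      hence "real a = of_int \<lceil>x - e\<rceil>" unfolding a_def by simp
      moreover have "of_int \<lceil>x - e\<rceil> \<ge> x - e" by (rule le_of_int_ceiling)
      ultimately show ?thesis using c2 by linarith
    next
      case False
      hence "x - e < 0" by linarith
      thus ?thesis using c2 unfolding a_def by simp
    qed
    moreover have "2 * e \<le> real K" unfolding K_def using e by linarith
    ultimately have "c < a + K" by linarith
    thus "c \<in> {a..<a + K}" using ca by simp
  qed
  have "card {c \<in> {..n}. \<bar>real c - x\<bar> < e} \<le> card {a..<a + K}" by (rule card_mono[OF _ sub]) simp
  also have "\<dots> = K" by simp
  finally have "real (card {c \<in> {..n}. \<bar>real c - x\<bar> < e}) \<le> real K" by linarith
  also have "real K \<le> 2 * e + 1" unfolding K_def using e by linarith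
  finally show ?thesis .
qed

lemma bn_window_mass:
  assumes p: "0 < p" "p < 1" and n: "n \<ge> 1"
  shows "(\<Sum>c\<in>{c \<in> {..n}. \<bar>real c - real n * p\<bar> < sqrt (real n)}. bn n p c) \<ge> 1 / 2"
proof -
  define B where "B = binomial_pmf n p"
  interpret binomial_distribution n p using p by unfold_locales auto
  have h: "measure_pmf.prob B {x. \<bar>real x - real n * p\<bar> \<ge> sqrt (real n)} \<le> 2 * exp (-2 * (sqrt (real n))\<^sup>2 / real n)"
    unfolding B_def using n by (intro prob_abs_ge) auto
  have "exp (1::real) \<ge> 2" using exp_ge_add_one_self[of 1] by simp
  hence "exp (1::real) ^ 2 \<ge> 2 ^ 2" by (intro power_mono) auto
  hence e2: "exp (2::real) \<ge> 4" by (simp add: exp_of_nat_mult[symmetric])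
  have "2 * exp (-2 * (sqrt (real n))\<^sup>2 / real n) = 2 / exp 2"
    using n by (simp add: exp_minus field_simps)
  also have "\<dots> \<le> 1 / 2" using e2 by (simp add: field_simps)
  finally have h2: "measure_pmf.prob B {x. \<bar>real x - real n * p\<bar> \<ge> sqrt (real n)} \<le> 1/2" using h by linarith
  have "measure_pmf.prob B {x. \<bar>real x - real n * p\<bar> < sqrt (real n)} = 1 - measure_pmf.prob B {x. \<bar>real x - real n * p\<bar> \<ge> sqrt (real n)}"
    using measure_pmf.prob_compl[of "{x. \<bar>real x - real n * p\<bar> \<ge> sqrt (real n)}" B]
    by (simp add: Compl_eq_Diff_UNIV[symmetric] not_le Collect_neg_eq[symmetric])
  hence h3: "measure_pmf.prob B {x. \<bar>real x - real n * p\<bar> < sqrt (real n)} \<ge> 1/2" using h2 by linarith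
  have "measure_pmf.prob B {x. \<bar>real x - real n * p\<bar> < sqrt (real n)}
     = measure_pmf.prob B ({x. \<bar>real x - real n * p\<bar> < sqrt (real n)} \<inter> set_pmf B)"
    by (simp add: measure_Int_set_pmf)
  also have "\<dots> \<le> measure_pmf.prob B {c \<in> {..n}. \<bar>real c - real n * p\<bar> < sqrt (real n)}"
    unfolding B_def using p by (intro measure_pmf.finite_measure_mono) (auto simp: set_pmf_binomial_eq)
  also have "\<dots> = (\<Sum>c\<in>{c \<in> {..n}. \<bar>real c - real n * p\<bar> < sqrt (real n)}. bn n p c)"
    unfolding B_def using p by (simp add: measure_measure_pmf_finite bn_pmf)
  finally show ?thesis using h3 by linarith
qed

lemma bn_cube_lower:
  assumes p: "0 < p" "p < 1" and n: "n \<ge> 1"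
  shows "(\<Sum>c\<le>n. bn n p c ^ 3) \<ge> 1 / (72 * real n)"
proof -
  define W where "W = {c \<in> {..n}. \<bar>real c - real n * p\<bar> < sqrt (real n)}"
  have fW: "finite W" unfolding W_def by simp
  have m: "(\<Sum>c\<in>W. bn n p c) \<ge> 1/2" unfolding W_def by (rule bn_window_mass[OF p n])
  have cW: "real (card W) \<le> 2 * sqrt (real n) + 1" unfolding W_def by (rule window_card) simp
  have sn: "sqrt (real n) \<ge> 1" using n by simp
  have cW3: "real (card W) \<le> 3 * sqrt (real n)" using cW sn by linarith
  have cWp: "real (card W) > 0"
  proof -
    have "W \<noteq> {}" using m by auto
    thus ?thesis using fW by (simp add: card_gt_0_iff)
  qed
  have "(1/2) ^ 3 \<le> (\<Sum>c\<in>W. bn n p c) ^ 3" using m by (intro power_mono) auto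
  also have "\<dots> \<le> real (card W) ^ 2 * (\<Sum>c\<in>W. bn n p c ^ 3)"
    using p by (intro holder3 fW bn_nonneg) auto
  also have "\<dots> \<le> (3 * sqrt (real n)) ^ 2 * (\<Sum>c\<in>W. bn n p c ^ 3)"
    using cW3 cWp p by (intro mult_right_mono power_mono sum_nonneg) (auto simp: bn_nonneg)
  also have "\<dots> = 9 * real n * (\<Sum>c\<in>W. bn n p c ^ 3)" by (simp add: power_mult_distrib)
  also have "(\<Sum>c\<in>W. bn n p c ^ 3) \<le> (\<Sum>c\<le>n. bn n p c ^ 3)"
    unfolding W_def using p by (intro sum_mono2) (auto simp: bn_nonneg)
  hence "9 * real n * (\<Sum>c\<in>W. bn n p c ^ 3) \<le> 9 * real n * (\<Sum>c\<le>n. bn n p c ^ 3)"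
    by (intro mult_left_mono) auto
  finally have "(1/2::real)^3 \<le> 9 * real n * (\<Sum>c\<le>n. bn n p c ^ 3)" .
  hence "1 \<le> 72 * real n * (\<Sum>c\<le>n. bn n p c ^ 3)" by (simp add: power3_eq_cube)
  thus ?thesis using n by (simp add: field_simps)
qed


lemma bn_0: "bn 0 p c = (if c = 0 then 1 else 0)"
  unfolding bn_def by (cases c) auto

lemma bn_Suc_0: "bn (Suc n) p 0 = bn n p 0 * (1 - p)"
  unfolding bn_def by simp

lemma bn_Suc_Suc: "bn (Suc n) p (Suc c) = bn n p c * p + bn n p (Suc c) * (1 - p)"
proof (cases "c \<le> n")
  case False
  thus ?thesis by (simp add: bn_zero)
next
  case True
  have e1: "Suc n - Suc c = n - c" by simp
  show ?thesis
  proof (cases "c = n")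
    case True
    thus ?thesis unfolding bn_def by (simp add: bn_def)
  next
    case False
    hence ns: "n - c = Suc (n - Suc c)" using True by simp
    show ?thesis unfolding bn_def binomial_Suc_Suc e1 of_nat_add ns
      by (simp add: algebra_simps)
  qed
qed


locale bern_arr = prob_space M for M :: "'a measure" +
  fixes Z :: "'i \<Rightarrow> 'a \<Rightarrow> bool" and I :: "'i set" and q :: "'i \<Rightarrow> real"
  assumes Zmeas: "\<And>i. i \<in> I \<Longrightarrow> Z i \<in> measurable M (count_space UNIV)"
  and cylP: "\<And>F v. finite F \<Longrightarrow> F \<subseteq> I \<Longrightarrow>
     prob {\<omega> \<in> space M. \<forall>i\<in>F. Z i \<omega> = v i} = (\<Prod>i\<in>F. if v i then q i else 1 - q i)"
begin

definition cyl :: "'i set \<Rightarrow> ('i \<Rightarrow> bool) \<Rightarrow> 'a set" where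
  "cyl F v = {\<omega> \<in> space M. \<forall>i\<in>F. Z i \<omega> = v i}"

definition evt :: "'i set \<Rightarrow> (('i \<Rightarrow> bool) \<Rightarrow> bool) \<Rightarrow> 'a set" where
  "evt F \<Phi> = {\<omega> \<in> space M. \<Phi> (restrict (\<lambda>i. Z i \<omega>) F)}"

lemma cyl_sets: "finite F \<Longrightarrow> F \<subseteq> I \<Longrightarrow> cyl F v \<in> events"
  unfolding cyl_def
proof (intro sets.sets_Collect_finite_All)
  fix i assume "i \<in> F" "F \<subseteq> I"
  hence "Z i -` {v i} \<inter> space M \<in> events" using Zmeas by (intro measurable_sets) auto
  moreover have "Z i -` {v i} \<inter> space M = {\<omega> \<in> space M. Z i \<omega> = v i}" by auto
  ultimately show "{\<omega> \<in> space M. Z i \<omega> = v i} \<in> events" by simp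
qed auto

lemma evt_decomp:
  "evt F \<Phi> = (\<Union>v\<in>{v \<in> PiE F (\<lambda>_. UNIV). \<Phi> v}. cyl F v)"
proof safe
  fix \<omega> assume w: "\<omega> \<in> evt F \<Phi>"
  show "\<omega> \<in> (\<Union>v\<in>{v \<in> PiE F (\<lambda>_. UNIV). \<Phi> v}. cyl F v)"
    using w by (intro UN_I[of "restrict (\<lambda>i. Z i \<omega>) F"]) (auto simp: evt_def cyl_def)
next
  fix \<omega> v assume v: "v \<in> PiE F (\<lambda>_. UNIV)" "\<Phi> v" and w: "\<omega> \<in> cyl F v"
  have "restrict (\<lambda>i. Z i \<omega>) F = v"
    using v w by (auto simp: cyl_def PiE_def extensional_def fun_eq_iff)
  thus "\<omega> \<in> evt F \<Phi>" using v w by (auto simp: evt_def cyl_def)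
qed

lemma cyl_disj: "disjoint_family_on (cyl F) (PiE F (\<lambda>_. UNIV))"
  unfolding disjoint_family_on_def
proof (intro ballI impI)
  fix v w :: "'i \<Rightarrow> bool" assume v: "v \<in> PiE F (\<lambda>_. UNIV)" and w: "w \<in> PiE F (\<lambda>_. UNIV)" and ne: "v \<noteq> w"
  show "cyl F v \<inter> cyl F w = {}"
  proof (rule ccontr)
    assume "cyl F v \<inter> cyl F w \<noteq> {}"
    then obtain \<omega> where "\<omega> \<in> cyl F v" "\<omega> \<in> cyl F w" by auto
    hence "\<forall>i\<in>F. v i = w i" by (auto simp: cyl_def)
    hence "v = w" using v w by (auto simp: PiE_def extensional_def fun_eq_iff)
    thus False using ne by simp
  qed
qed

lemma fin_V: "finite F \<Longrightarrow> finite {v \<in> PiE F (\<lambda>_. UNIV::bool set). \<Phi> v}"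
proof -
  assume F: "finite F"
  have "finite (PiE F (\<lambda>_. UNIV::bool set))" using F by (intro finite_PiE) auto
  thus ?thesis by (rule finite_subset[rotated]) auto
qed

lemma evt_sets: "finite F \<Longrightarrow> F \<subseteq> I \<Longrightarrow> evt F \<Phi> \<in> events"
  unfolding evt_decomp by (rule sets.finite_UN[OF fin_V]) (auto intro: cyl_sets)

lemma evt_prob: "finite F \<Longrightarrow> F \<subseteq> I \<Longrightarrow>
  prob (evt F \<Phi>) = (\<Sum>v\<in>{v \<in> PiE F (\<lambda>_. UNIV). \<Phi> v}. prob (cyl F v))"
  unfolding evt_decomp
proof (rule finite_measure_finite_Union)
  assume F: "finite F" "F \<subseteq> I"
  show "finite {v \<in> F \<rightarrow>\<^sub>E UNIV. \<Phi> v}" using F(1) by (rule fin_V)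
  show "cyl F ` {v \<in> F \<rightarrow>\<^sub>E UNIV. \<Phi> v} \<subseteq> events" using F cyl_sets by blast
  show "disjoint_family_on (cyl F) {v \<in> F \<rightarrow>\<^sub>E UNIV. \<Phi> v}"
    by (rule disjoint_family_on_mono[OF _ cyl_disj]) blast
qed

lemma evt_prob': "finite F \<Longrightarrow> F \<subseteq> I \<Longrightarrow>
  prob (evt F \<Phi>) = (\<Sum>v\<in>{v \<in> PiE F (\<lambda>_. UNIV). \<Phi> v}. \<Prod>i\<in>F. if v i then q i else 1 - q i)"
  unfolding evt_prob by (intro sum.cong refl) (simp add: cylP cyl_def)

lemma cyl_prob: "finite F \<Longrightarrow> F \<subseteq> I \<Longrightarrow> prob (cyl F v) = (\<Prod>i\<in>F. if v i then q i else 1 - q i)"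
  unfolding cyl_def by (rule cylP)

lemma cyl_indep:
  assumes F: "finite F1" "finite F2" "F1 \<subseteq> I" "F2 \<subseteq> I" "F1 \<inter> F2 = {}"
  shows "prob (cyl F1 v1 \<inter> cyl F2 v2) = prob (cyl F1 v1) * prob (cyl F2 v2)"
proof -
  define w where "w = (\<lambda>i. if i \<in> F1 then v1 i else v2 i)"
  have w1: "\<And>i. i \<in> F1 \<Longrightarrow> w i = v1 i" unfolding w_def by simp
  have w2: "\<And>i. i \<in> F2 \<Longrightarrow> w i = v2 i" unfolding w_def using F(5) by auto
  have "cyl F1 v1 \<inter> cyl F2 v2 = cyl (F1 \<union> F2) w"
    unfolding cyl_def using w1 w2 by blast
  hence "prob (cyl F1 v1 \<inter> cyl F2 v2) = (\<Prod>i\<in>F1 \<union> F2. if w i then q i else 1 - q i)"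
    using F by (simp add: cyl_prob)
  also have "\<dots> = (\<Prod>i\<in>F1. if w i then q i else 1 - q i) * (\<Prod>i\<in>F2. if w i then q i else 1 - q i)"
    using F by (intro prod.union_disjoint) auto
  also have "(\<Prod>i\<in>F1. if w i then q i else 1 - q i) = (\<Prod>i\<in>F1. if v1 i then q i else 1 - q i)"
    using w1 by (intro prod.cong) auto
  also have "(\<Prod>i\<in>F2. if w i then q i else 1 - q i) = (\<Prod>i\<in>F2. if v2 i then q i else 1 - q i)"
    using w2 by (intro prod.cong) auto
  finally show ?thesis using F by (simp add: cyl_prob)
qed

lemma UN_Int_UN_prod: "(\<Union>v\<in>A. f v) \<inter> (\<Union>w\<in>B. g w) = (\<Union>vv\<in>A \<times> B. f (fst vv) \<inter> g (snd vv))"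
  by auto

lemma evt_indep:
  assumes F: "finite F1" "finite F2" "F1 \<subseteq> I" "F2 \<subseteq> I" "F1 \<inter> F2 = {}"
  shows "prob (evt F1 \<Phi> \<inter> evt F2 \<Psi>) = prob (evt F1 \<Phi>) * prob (evt F2 \<Psi>)"
proof -
  define V1 where "V1 = {v \<in> PiE F1 (\<lambda>_. UNIV). \<Phi> v}"
  define V2 where "V2 = {v \<in> PiE F2 (\<lambda>_. UNIV). \<Psi> v}"
  have fV: "finite V1" "finite V2" unfolding V1_def V2_def using F by (auto intro: fin_V)
  have "evt F1 \<Phi> \<inter> evt F2 \<Psi> = (\<Union>vv\<in>V1 \<times> V2. cyl F1 (fst vv) \<inter> cyl F2 (snd vv))"
    unfolding evt_decomp V1_def V2_def by (rule UN_Int_UN_prod)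
  hence "prob (evt F1 \<Phi> \<inter> evt F2 \<Psi>) = (\<Sum>vv\<in>V1 \<times> V2. prob (cyl F1 (fst vv) \<inter> cyl F2 (snd vv)))"
  proof (simp only:, intro finite_measure_finite_Union)
    show "finite (V1 \<times> V2)" using fV by simp
    show "(\<lambda>vv. cyl F1 (fst vv) \<inter> cyl F2 (snd vv)) ` (V1 \<times> V2) \<subseteq> events"
      using F by (auto intro!: sets.Int cyl_sets)
    show "disjoint_family_on (\<lambda>vv. cyl F1 (fst vv) \<inter> cyl F2 (snd vv)) (V1 \<times> V2)"
      unfolding disjoint_family_on_def
    proof (intro ballI impI)
      fix a b assume a: "a \<in> V1 \<times> V2" and b: "b \<in> V1 \<times> V2" and ne: "a \<noteq> b"
      show "cyl F1 (fst a) \<inter> cyl F2 (snd a) \<inter> (cyl F1 (fst b) \<inter> cyl F2 (snd b)) = {}"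
      proof (cases "fst a = fst b")
        case True
        hence "snd a \<noteq> snd b" using ne by (simp add: prod_eq_iff)
        moreover have "snd a \<in> PiE F2 (\<lambda>_. UNIV)" "snd b \<in> PiE F2 (\<lambda>_. UNIV)"
          using a b unfolding V2_def by auto
        ultimately have "cyl F2 (snd a) \<inter> cyl F2 (snd b) = {}"
          using cyl_disj[of F2] unfolding disjoint_family_on_def by blast
        thus ?thesis by auto
      next
        case False
        moreover have "fst a \<in> PiE F1 (\<lambda>_. UNIV)" "fst b \<in> PiE F1 (\<lambda>_. UNIV)"
          using a b unfolding V1_def by auto
        ultimately have "cyl F1 (fst a) \<inter> cyl F1 (fst b) = {}"
          using cyl_disj[of F1] unfolding disjoint_family_on_def by blast
        thus ?thesis by auto
      qed
    qed
  qed
  also have "\<dots> = (\<Sum>vv\<in>V1 \<times> V2. prob (cyl F1 (fst vv)) * prob (cyl F2 (snd vv)))"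
    using F by (intro sum.cong refl cyl_indep) auto
  also have "\<dots> = (\<Sum>v1\<in>V1. prob (cyl F1 v1)) * (\<Sum>v2\<in>V2. prob (cyl F2 v2))"
    unfolding sum_product sum.cartesian_product by (simp add: case_prod_beta)
  also have "\<dots> = prob (evt F1 \<Phi>) * prob (evt F2 \<Psi>)"
    using F by (simp add: evt_prob V1_def V2_def)
  finally show ?thesis .
qed

end


lemma recurrent_case:
  fixes U g :: "nat \<Rightarrow> real"
  assumes U: "\<And>m. U m \<ge> 0" and g0: "\<And>L. g L \<ge> 0"
    and gm: "\<And>L L'. L \<le> L' \<Longrightarrow> g L' \<le> g L"
    and ren: "\<And>N. (\<Sum>m\<le>N. U m * g (N - m)) = 1"
    and lim: "g \<longlonglongrightarrow> G" and ns: "\<not> summable U"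
  shows "G = 0"
proof -
  have dec: "decseq g" unfolding decseq_def using gm by auto
  have Gle: "G \<le> g N" for N by (rule decseq_ge[OF dec lim])
  have G0: "G \<ge> 0" by (rule LIMSEQ_le_const[OF lim]) (use g0 in auto)
  show ?thesis
  proof (rule ccontr)
    assume "G \<noteq> 0"
    hence Gp: "G > 0" using G0 by simp
    have "(\<Sum>i<n. U i) \<le> 1 / G" for n
    proof (cases n)
      case 0 thus ?thesis using Gp by simp
    next
      case (Suc N)
      have "G * (\<Sum>m\<le>N. U m) = (\<Sum>m\<le>N. U m * G)" by (simp add: sum_distrib_left mult_ac)
      also have "\<dots> \<le> (\<Sum>m\<le>N. U m * g (N - m))"
        using U Gle by (intro sum_mono mult_left_mono) auto
      also have "\<dots> = 1" by (rule ren)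
      finally have "(\<Sum>m\<le>N. U m) \<le> 1 / G" using Gp by (simp add: field_simps)
      thus ?thesis using Suc by (simp add: lessThan_Suc_atMost)
    qed
    hence "summable U" using U by (intro summableI_nonneg_bounded) auto
    thus False using ns by simp
  qed
qed

lemma transient_case:
  fixes U g :: "nat \<Rightarrow> real"
  assumes U: "\<And>m. U m \<ge> 0" and g0: "\<And>L. g L \<ge> 0" and g1: "\<And>L. g L \<le> 1"
    and gm: "\<And>L L'. L \<le> L' \<Longrightarrow> g L' \<le> g L"
    and ren: "\<And>N. (\<Sum>m\<le>N. U m * g (N - m)) = 1"
    and lim: "g \<longlonglongrightarrow> G" and su: "summable U"
  shows "G > 0"
proof -
  define S where "S = suminf U"
  have ps: "(\<lambda>n. \<Sum>i<n. U i) \<longlonglongrightarrow> S" unfolding S_def using su by (rule summable_LIMSEQ)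
  have psle: "(\<Sum>i<n. U i) \<le> S" for n unfolding S_def using su U by (intro sum_le_suminf) auto
  obtain M1 where M1: "\<And>n. n \<ge> M1 \<Longrightarrow> dist (\<Sum>i<n. U i) S < 1/2"
    using ps unfolding lim_sequentially by (metis less_divide_eq_numeral1(1) mult_eq_0_iff zero_less_one divide_pos_pos zero_less_numeral)
  define M0 where "M0 = M1"
  have tail: "(\<Sum>m\<in>{M0<..N}. U m) \<le> 1/2" for N
  proof (cases "M0 \<le> N")
    case False thus ?thesis by simp
  next
    case True
    have "(\<Sum>i<Suc N. U i) = (\<Sum>i<Suc M0. U i) + (\<Sum>m\<in>{M0<..N}. U m)"
    proof -
      have "{..<Suc N} = {..<Suc M0} \<union> {M0<..N}" using True by auto
      moreover have "{..<Suc M0} \<inter> {M0<..N} = {}" by auto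
      ultimately show ?thesis by (simp add: sum.union_disjoint)
    qed
    moreover have "dist (\<Sum>i<Suc M0. U i) S < 1/2"
    proof -
      have "Suc M0 \<ge> M1" unfolding M0_def by simp
      from M1[OF this] show ?thesis .
    qed
    moreover have "(\<Sum>i<Suc N. U i) \<le> S" by (rule psle)
    ultimately show ?thesis by (simp add: dist_real_def abs_if split: if_splits)
  qed
  have S1: "S \<ge> 1 / 2"
  proof -
    have "(\<Sum>m\<le>0. U m * g (0 - m)) = 1" by (rule ren)
    hence "U 0 * g 0 = 1" by simp
    hence "U 0 \<ge> 1" using g1[of 0] U[of 0] g0[of 0]
      by (metis mult_left_le mult.commute)
    moreover have "(\<Sum>i<Suc 0. U i) \<le> S" by (rule psle)
    ultimately show ?thesis by simp
  qed
  have gK: "g K \<ge> 1 / (2 * S)" for K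
  proof -
    define N where "N = M0 + K"
    have "1 = (\<Sum>m\<le>N. U m * g (N - m))" by (rule ren[symmetric])
    also have "\<dots> = (\<Sum>m\<le>M0. U m * g (N - m)) + (\<Sum>m\<in>{M0<..N}. U m * g (N - m))"
    proof -
      have "{..N} = {..M0} \<union> {M0<..N}" unfolding N_def by auto
      moreover have "{..M0} \<inter> {M0<..N} = {}" by auto
      ultimately show ?thesis by (simp add: sum.union_disjoint)
    qed
    also have "(\<Sum>m\<le>M0. U m * g (N - m)) \<le> (\<Sum>m\<le>M0. U m * g K)"
      using U unfolding N_def by (intro sum_mono mult_left_mono gm) auto
    also have "(\<Sum>m\<in>{M0<..N}. U m * g (N - m)) \<le> (\<Sum>m\<in>{M0<..N}. U m)"
      using U g1 by (intro sum_mono) (simp add: mult_left_le)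
    also have "(\<Sum>m\<le>M0. U m * g K) = g K * (\<Sum>m<Suc M0. U m)"
      by (simp add: sum_distrib_left mult_ac lessThan_Suc_atMost)
    also have "\<dots> \<le> g K * S" using g0 psle[of "Suc M0"] by (intro mult_left_mono) auto
    finally have "1 \<le> g K * S + 1/2" using tail[of N] by linarith
    hence "1/2 \<le> g K * S" by simp
    thus ?thesis using S1 by (simp add: field_simps)
  qed
  have "G \<ge> 1 / (2 * S)" by (rule LIMSEQ_le_const[OF lim]) (use gK in auto)
  moreover have "1 / (2 * S) > 0" using S1 by simp
  ultimately show ?thesis by linarith
qed

lemma gen_summable:
  fixes a :: "nat \<Rightarrow> real"
  assumes a: "\<And>n. 0 \<le> a n" "\<And>n. a n \<le> 1" and x: "0 \<le> x" "x < 1"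
  shows "summable (\<lambda>n. a n * x ^ Suc n)"
proof (rule summable_comparison_test'[of "\<lambda>n. x ^ Suc n"])
  show "summable (\<lambda>n. x ^ Suc n)" using x by (simp add: summable_geometric)
  fix n show "norm (a n * x ^ Suc n) \<le> x ^ Suc n"
    using a x by (simp add: abs_mult mult_left_le_one_le)
qed

lemma gen_conv:
  fixes a :: "nat \<Rightarrow> real"
  assumes a: "\<And>n. 0 \<le> a n" and su: "summable a"
  shows "\<exists>L. ((\<lambda>x. \<Sum>n. a n * x ^ Suc n) \<longlongrightarrow> L) (at_left 1)"
proof -
  define f where "f = (\<lambda>x::real. \<Sum>n. a n * x ^ Suc n)"
  have ul: "uniform_limit {0..1} (\<lambda>N x. \<Sum>n<N. a n * x ^ Suc n) f sequentially"
    unfolding f_def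
  proof (rule Weierstrass_m_test[OF _ su])
    fix n and x :: real assume "x \<in> {0..1}"
    hence "x ^ Suc n \<le> 1" "x ^ Suc n \<ge> 0" by (simp_all add: power_le_one del: power_Suc)
    thus "norm (a n * x ^ Suc n) \<le> a n" using a[of n]
      by (simp only: real_norm_def abs_mult abs_of_nonneg) (rule mult_left_le)
  qed
  have "continuous_on {0..1} f"
    by (rule uniform_limit_theorem[OF _ ul]) (auto intro!: always_eventually continuous_intros)
  hence "(f \<longlongrightarrow> f 1) (at 1 within {0..1})"
    unfolding continuous_on_def by auto
  hence "(f \<longlongrightarrow> f 1) (at_left 1)" by (simp add: at_within_Icc_at_left)
  thus ?thesis unfolding f_def by blast
qed

lemma gen_div:
  fixes a :: "nat \<Rightarrow> real"
  assumes a: "\<And>n. 0 \<le> a n" "\<And>n. a n \<le> 1" and ns: "\<not> summable a"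
  shows "filterlim (\<lambda>x. \<Sum>n. a n * x ^ Suc n) at_top (at_left 1)"
proof (unfold filterlim_at_top, intro allI)
  fix Z :: real
  have "\<exists>N. (\<Sum>n<N. a n) > Z"
  proof (rule ccontr)
    assume "\<not> ?thesis"
    hence "\<And>N. (\<Sum>n<N. a n) \<le> Z" by (simp add: not_less)
    hence "summable a" using a by (intro summableI_nonneg_bounded) auto
    thus False using ns by simp
  qed
  then obtain N where N: "(\<Sum>n<N. a n) > Z" by blast
  define P where "P = (\<lambda>x::real. \<Sum>n<N. a n * x ^ Suc n)"
  have "(P \<longlongrightarrow> P 1) (at_left 1)" unfolding P_def by (intro tendsto_intros)
  moreover have "P 1 > Z" unfolding P_def using N by simp
  ultimately have ev1: "eventually (\<lambda>x. P x > Z) (at_left 1)" by (rule order_tendstoD)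
  have ev2: "eventually (\<lambda>x. x \<in> {0<..<1::real}) (at_left 1)" by (rule eventually_at_left_real) simp
  show "eventually (\<lambda>x. Z \<le> (\<Sum>n. a n * x ^ Suc n)) (at_left 1)"
    using ev1 ev2
  proof eventually_elim
    case (elim x)
    have "P x \<le> (\<Sum>n. a n * x ^ Suc n)" unfolding P_def
      using elim a by (intro sum_le_suminf gen_summable) auto
    thus ?case using elim by simp
  qed
qed


locale rsetup = prob_space M for M :: "'a measure" +
  fixes X :: "nat \<Rightarrow> nat \<Rightarrow> 'a \<Rightarrow> bool" and p :: "nat \<Rightarrow> real" and d :: nat
  assumes d1: "d \<ge> 1"
  and pp: "\<forall>j\<in>{1..d}. 0 < p j \<and> p j < 1"
  and ind: "indep_vars (\<lambda>_. count_space UNIV) (\<lambda>(j, k). X j k) ({1..d} \<times> {1..})"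
  and marg: "\<forall>j\<in>{1..d}. \<forall>k\<ge>1. measure M {\<omega> \<in> space M. X j k \<omega>} = p j"
begin

abbreviation "II \<equiv> {1..d} \<times> {(1::nat)..}"

definition Zs :: "nat \<Rightarrow> nat \<times> nat \<Rightarrow> 'a \<Rightarrow> bool" where
  "Zs m i = X (fst i) (snd i + m)"

definition Xs :: "nat \<Rightarrow> nat \<Rightarrow> nat \<Rightarrow> 'a \<Rightarrow> bool" where
  "Xs m j k = X j (k + m)"

lemma Xs0: "Xs 0 = X" unfolding Xs_def by (simp add: fun_eq_iff)

lemma Xmeas: "j \<in> {1..d} \<Longrightarrow> k \<ge> 1 \<Longrightarrow> X j k \<in> measurable M (count_space UNIV)"
  using ind unfolding indep_vars_def by auto

lemma Xev: "j \<in> {1..d} \<Longrightarrow> k \<ge> 1 \<Longrightarrow> X j k -` {b} \<inter> space M \<in> events"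
  using Xmeas by (intro measurable_sets) auto

lemma prob_Xb: "j \<in> {1..d} \<Longrightarrow> k \<ge> 1 \<Longrightarrow>
  prob (X j k -` {b} \<inter> space M) = (if b then p j else 1 - p j)"
proof -
  assume jk: "j \<in> {1..d}" "k \<ge> 1"
  have e: "X j k -` {True} \<inter> space M = {\<omega> \<in> space M. X j k \<omega>}" by auto
  show ?thesis
  proof (cases b)
    case True thus ?thesis using marg jk e by simp
  next
    case False
    have "X j k -` {False} \<inter> space M = space M - (X j k -` {True} \<inter> space M)" by auto
    hence "prob (X j k -` {False} \<inter> space M) = 1 - prob (X j k -` {True} \<inter> space M)"
      using Xev[OF jk] by (simp add: prob_compl)
    thus ?thesis using False marg jk e by simp
  qed
qed

lemma cylP_shift:
  assumes F: "finite F" "F \<subseteq> II"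
  shows "prob {\<omega> \<in> space M. \<forall>i\<in>F. Zs m i \<omega> = v i} = (\<Prod>i\<in>F. if v i then p (fst i) else 1 - p (fst i))"
proof (cases "F = {}")
  case True thus ?thesis by (simp add: prob_space)
next
  case False
  define sh where "sh = (\<lambda>i::nat\<times>nat. (fst i, snd i + m))"
  define A where "A = (\<lambda>i::nat\<times>nat. {v (fst i, snd i - m)})"
  have inj: "inj_on sh F" unfolding sh_def inj_on_def by (auto simp: prod_eq_iff)
  have J: "sh ` F \<subseteq> II" "finite (sh ` F)" "sh ` F \<noteq> {}" using F False unfolding sh_def by auto
  have "prob (\<Inter>i\<in>sh ` F. (\<lambda>(j, k). X j k) i -` A i \<inter> space M) =
        (\<Prod>i\<in>sh ` F. prob ((\<lambda>(j, k). X j k) i -` A i \<inter> space M))"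
    using J by (intro indep_varsD[OF ind]) auto
  also have "(\<Inter>i\<in>sh ` F. (\<lambda>(j, k). X j k) i -` A i \<inter> space M) = {\<omega> \<in> space M. \<forall>i\<in>F. Zs m i \<omega> = v i}"
    using False unfolding sh_def A_def Zs_def by (auto simp: case_prod_beta)
  also have "(\<Prod>i\<in>sh ` F. prob ((\<lambda>(j, k). X j k) i -` A i \<inter> space M)) =
      (\<Prod>i\<in>F. prob ((\<lambda>(j, k). X j k) (sh i) -` A (sh i) \<inter> space M))"
    by (subst prod.reindex[OF inj]) (simp add: o_def)
  also have "\<dots> = (\<Prod>i\<in>F. if v i then p (fst i) else 1 - p (fst i))"
  proof (intro prod.cong refl)
    fix i assume i: "i \<in> F"
    hence "fst i \<in> {1..d}" "snd i + m \<ge> 1" using F by auto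
    thus "prob ((\<lambda>(j, k). X j k) (sh i) -` A (sh i) \<inter> space M) = (if v i then p (fst i) else 1 - p (fst i))"
      unfolding sh_def A_def by (simp add: case_prod_beta prob_Xb)
  qed
  finally show ?thesis .
qed

lemma bern: "bern_arr M (Zs m) II (\<lambda>i. p (fst i))"
proof unfold_locales
  fix i assume "i \<in> II"
  thus "Zs m i \<in> measurable M (count_space UNIV)" unfolding Zs_def using Xmeas by auto
next
  fix F v assume "finite F" "F \<subseteq> II"
  thus "prob {\<omega> \<in> space M. \<forall>i\<in>F. Zs m i \<omega> = v i} = (\<Prod>i\<in>F. if v i then p (fst i) else 1 - p (fst i))"
    by (rule cylP_shift)
qed

definition evm :: "nat \<Rightarrow> (nat \<times> nat) set \<Rightarrow> ((nat \<times> nat \<Rightarrow> bool) \<Rightarrow> bool) \<Rightarrow> 'a set" where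
  "evm m F \<Phi> = {\<omega> \<in> space M. \<Phi> (restrict (\<lambda>i. Zs m i \<omega>) F)}"

lemma evm_evt: "evm m F \<Phi> = bern_arr.evt M (Zs m) F \<Phi>"
  unfolding evm_def bern_arr.evt_def[OF bern] ..

lemma evm_sets: "finite F \<Longrightarrow> F \<subseteq> II \<Longrightarrow> evm m F \<Phi> \<in> events"
  unfolding evm_evt by (rule bern_arr.evt_sets[OF bern])

lemma evm_prob: "finite F \<Longrightarrow> F \<subseteq> II \<Longrightarrow>
  prob (evm m F \<Phi>) = (\<Sum>v\<in>{v \<in> PiE F (\<lambda>_. UNIV). \<Phi> v}. \<Prod>i\<in>F. if v i then p (fst i) else 1 - p (fst i))"
  unfolding evm_evt by (rule bern_arr.evt_prob'[OF bern])

lemma evm_shift_prob: "finite F \<Longrightarrow> F \<subseteq> II \<Longrightarrow> prob (evm m F \<Phi>) = prob (evm 0 F \<Phi>)"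
  by (simp add: evm_prob)

lemma evm_indep: "finite F1 \<Longrightarrow> finite F2 \<Longrightarrow> F1 \<subseteq> II \<Longrightarrow> F2 \<subseteq> II \<Longrightarrow> F1 \<inter> F2 = {} \<Longrightarrow>
  prob (evm m F1 \<Phi> \<inter> evm m F2 \<Psi>) = prob (evm m F1 \<Phi>) * prob (evm m F2 \<Psi>)"
  unfolding evm_evt by (rule bern_arr.evt_indep[OF bern])

definition psv :: "(nat \<times> nat \<Rightarrow> bool) \<Rightarrow> nat \<Rightarrow> nat \<Rightarrow> nat \<Rightarrow> nat" where
  "psv v m j n = (\<Sum>i\<in>{1..n}. of_bool (v (j, i + m)))"

lemma psv_restrict:
  assumes "\<And>i. i \<in> {1..n} \<Longrightarrow> (j, i + a) \<in> F"
  shows "psv (restrict (\<lambda>i. Zs m i \<omega>) F) a j n = partial_sum (Xs (a + m)) j n \<omega>"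
  unfolding psv_def partial_sum_def Zs_def Xs_def using assms by (intro sum.cong) (auto simp: add.assoc)

definition Ren :: "nat \<Rightarrow> nat \<Rightarrow> 'a set" where
  "Ren m n = rencontre M (Xs m) d n"

definition NR :: "nat \<Rightarrow> nat \<Rightarrow> 'a set" where
  "NR m L = {\<omega> \<in> space M. \<forall>n\<in>{1..L}. \<omega> \<notin> Ren m n}"

lemma Ren_evm: "Ren m n = evm m ({1..d} \<times> {1..n}) (\<lambda>v. \<forall>j\<in>{1..d}. psv v 0 j n = psv v 0 1 n)"
proof -
  have "\<And>\<omega> j. j \<in> {1..d} \<Longrightarrow> psv (restrict (\<lambda>i. Zs m i \<omega>) ({1..d} \<times> {1..n})) 0 j n = partial_sum (Xs m) j n \<omega>"
    by (subst psv_restrict) auto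
  moreover have "1 \<in> {1..d}" using d1 by simp
  ultimately show ?thesis unfolding Ren_def rencontre_def evm_def
    by (intro Collect_cong conj_cong refl ball_cong) simp_all
qed

lemma NR_evm: "NR m L = evm m ({1..d} \<times> {1..L}) (\<lambda>v. \<forall>n\<in>{1..L}. \<not> (\<forall>j\<in>{1..d}. psv v 0 j n = psv v 0 1 n))"
proof -
  have "\<And>\<omega> j n. j \<in> {1..d} \<Longrightarrow> n \<in> {1..L} \<Longrightarrow> psv (restrict (\<lambda>i. Zs m i \<omega>) ({1..d} \<times> {1..L})) 0 j n = partial_sum (Xs m) j n \<omega>"
    by (subst psv_restrict) auto
  moreover have "1 \<in> {1..d}" using d1 by simp
  ultimately show ?thesis unfolding NR_def Ren_def rencontre_def evm_def
    by (intro Collect_cong conj_cong refl ball_cong) simp_all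
qed

lemma NR_evm0: "NR m L = evm 0 ({1..d} \<times> {m+1..m+L}) (\<lambda>v. \<forall>n\<in>{1..L}. \<not> (\<forall>j\<in>{1..d}. psv v m j n = psv v m 1 n))"
proof -
  have "\<And>\<omega> j n. j \<in> {1..d} \<Longrightarrow> n \<in> {1..L} \<Longrightarrow> psv (restrict (\<lambda>i. Zs 0 i \<omega>) ({1..d} \<times> {m+1..m+L})) m j n = partial_sum (Xs m) j n \<omega>"
    by (subst psv_restrict) auto
  moreover have "1 \<in> {1..d}" using d1 by simp
  ultimately show ?thesis unfolding NR_def Ren_def rencontre_def evm_def
    by (intro Collect_cong conj_cong refl ball_cong) simp_all
qed

lemma Ren_sets: "Ren m n \<in> events"
  unfolding Ren_evm by (rule evm_sets) auto

lemma NR_sets: "NR m L \<in> events"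
  unfolding NR_evm by (rule evm_sets) auto

lemma NR_shift: "prob (NR m L) = prob (NR 0 L)"
  unfolding NR_evm by (rule evm_shift_prob) auto

lemma Ren_NR_indep: "prob (Ren 0 m \<inter> NR m L) = prob (Ren 0 m) * prob (NR 0 L)"
proof -
  have "prob (Ren 0 m \<inter> NR m L) = prob (Ren 0 m) * prob (NR m L)"
  proof -
    have disj: "({1..d} \<times> {1..m}) \<inter> ({1..d} \<times> {m+1..m+L}) = {}" by (auto simp: Sigma_def)
    show ?thesis unfolding Ren_evm NR_evm0
      by (rule evm_indep[OF _ _ _ _ disj]) (simp_all add: subset_iff)
  qed
  thus ?thesis using NR_shift[of m L] by simp
qed

lemma ps_split: "partial_sum X j (m + n) \<omega> = partial_sum X j m \<omega> + partial_sum (Xs m) j n \<omega>"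
proof -
  have "partial_sum X j (m + n) \<omega> = partial_sum X j m \<omega> + (\<Sum>i\<in>{m+1..m+n}. of_bool (X j i \<omega>))"
    unfolding partial_sum_def by (rule sum.ub_add_nat) simp
  also have "(\<Sum>i\<in>{m+1..m+n}. of_bool (X j i \<omega>)) = partial_sum (Xs m) j n \<omega>"
  proof -
    have "{m+1..m+n} = {1+m..n+m}" by (simp add: add.commute)
    thus ?thesis unfolding partial_sum_def Xs_def by (simp only: sum.shift_bounds_cl_nat_ivl)
  qed
  finally show ?thesis .
qed


lemma Ren0_shift:
  assumes w: "\<omega> \<in> Ren 0 m"
  shows "\<omega> \<in> Ren 0 (m + n) \<longleftrightarrow> \<omega> \<in> Ren m n"
proof -
  have sp: "\<omega> \<in> space M" "\<forall>j\<in>{1..d}. partial_sum X j m \<omega> = partial_sum X 1 m \<omega>"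
    using w unfolding Ren_def rencontre_def Xs0 by blast+
  have "\<And>j. j \<in> {1..d} \<Longrightarrow> (partial_sum X j (m + n) \<omega> = partial_sum X 1 (m + n) \<omega>) = (partial_sum (Xs m) j n \<omega> = partial_sum (Xs m) 1 n \<omega>)"
  proof -
    fix j assume j: "j \<in> {1..d}"
    have "partial_sum X j (m + n) \<omega> = partial_sum X j m \<omega> + partial_sum (Xs m) j n \<omega>" by (rule ps_split)
    moreover have "partial_sum X 1 (m + n) \<omega> = partial_sum X 1 m \<omega> + partial_sum (Xs m) 1 n \<omega>" by (rule ps_split)
    moreover have "partial_sum X j m \<omega> = partial_sum X 1 m \<omega>" using sp(2) j by blast
    ultimately show "(partial_sum X j (m + n) \<omega> = partial_sum X 1 (m + n) \<omega>) = (partial_sum (Xs m) j n \<omega> = partial_sum (Xs m) 1 n \<omega>)"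
      by presburger
  qed
  hence "(\<forall>j\<in>{1..d}. partial_sum X j (m + n) \<omega> = partial_sum X 1 (m + n) \<omega>) = (\<forall>j\<in>{1..d}. partial_sum (Xs m) j n \<omega> = partial_sum (Xs m) 1 n \<omega>)"
    by (rule ball_cong[OF refl])
  thus ?thesis unfolding Ren_def rencontre_def Xs0 using sp(1) by blast
qed

definition DD :: "nat \<Rightarrow> nat \<Rightarrow> 'a set" where
  "DD N m = {\<omega> \<in> space M. (m = 0 \<or> \<omega> \<in> Ren 0 m) \<and> (\<forall>n\<in>{m+1..N}. \<omega> \<notin> Ren 0 n)}"

lemma DD0: "DD N 0 = NR 0 N"
  unfolding DD_def NR_def by auto

lemma DDm:
  assumes m: "1 \<le> m" "m \<le> N"
  shows "DD N m = Ren 0 m \<inter> NR m (N - m)"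
proof (intro set_eqI iffI)
  fix \<omega> assume w: "\<omega> \<in> DD N m"
  hence r: "\<omega> \<in> Ren 0 m" "\<omega> \<in> space M" using m unfolding DD_def by auto
  have "\<forall>n\<in>{1..N-m}. \<omega> \<notin> Ren m n"
  proof
    fix n assume n: "n \<in> {1..N-m}"
    hence "m + n \<in> {m+1..N}" by auto
    hence "\<omega> \<notin> Ren 0 (m + n)" using w unfolding DD_def by auto
    thus "\<omega> \<notin> Ren m n" using Ren0_shift[OF r(1)] by simp
  qed
  thus "\<omega> \<in> Ren 0 m \<inter> NR m (N - m)" using r unfolding NR_def by auto
next
  fix \<omega> assume w: "\<omega> \<in> Ren 0 m \<inter> NR m (N - m)"
  hence r: "\<omega> \<in> Ren 0 m" "\<omega> \<in> space M" unfolding NR_def by auto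
  have "\<forall>n\<in>{m+1..N}. \<omega> \<notin> Ren 0 n"
  proof
    fix n assume n: "n \<in> {m+1..N}"
    hence "n - m \<in> {1..N-m}" by auto
    hence "\<omega> \<notin> Ren m (n - m)" using w unfolding NR_def by auto
    moreover have "n = m + (n - m)" using n by auto
    ultimately show "\<omega> \<notin> Ren 0 n" using Ren0_shift[OF r(1), of "n - m"] by simp
  qed
  thus "\<omega> \<in> DD N m" using r unfolding DD_def by auto
qed

lemma DD_disj: "disjoint_family_on (DD N) {..N}"
  unfolding disjoint_family_on_def
proof (intro ballI impI)
  fix m m' assume "m \<in> {..N}" "m' \<in> {..N}" "m \<noteq> m'"
  show "DD N m \<inter> DD N m' = {}"
  proof (cases "m < m'")
    case True
    thus ?thesis using \<open>m' \<in> {..N}\<close> unfolding DD_def by auto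
  next
    case False
    hence "m' < m" using \<open>m \<noteq> m'\<close> by simp
    thus ?thesis using \<open>m \<in> {..N}\<close> unfolding DD_def by auto
  qed
qed

lemma DD_cover: "(\<Union>m\<in>{..N}. DD N m) = space M"
proof (intro set_eqI iffI)
  fix \<omega> assume "\<omega> \<in> (\<Union>m\<in>{..N}. DD N m)" thus "\<omega> \<in> space M" unfolding DD_def by auto
next
  fix \<omega> assume w: "\<omega> \<in> space M"
  define S where "S = {n \<in> {1..N}. \<omega> \<in> Ren 0 n} \<union> {0}"
  define m where "m = Max S"
  have fS: "finite S" "S \<noteq> {}" unfolding S_def by auto
  have mS: "m \<in> S" unfolding m_def using fS by (rule Max_in)
  have mmax: "\<And>n. n \<in> S \<Longrightarrow> n \<le> m" unfolding m_def using fS by simp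
  have "m \<le> N" using mS unfolding S_def by auto
  moreover have "m = 0 \<or> \<omega> \<in> Ren 0 m" using mS unfolding S_def by auto
  moreover have "\<forall>n\<in>{m+1..N}. \<omega> \<notin> Ren 0 n"
  proof (intro ballI notI)
    fix n assume n: "n \<in> {m+1..N}" "\<omega> \<in> Ren 0 n"
    hence "n \<in> S" unfolding S_def by auto
    hence "n \<le> m" by (rule mmax)
    thus False using n by auto
  qed
  ultimately show "\<omega> \<in> (\<Union>m\<in>{..N}. DD N m)" using w unfolding DD_def by blast
qed

definition uu :: "nat \<Rightarrow> real" where
  "uu m = (if m = 0 then 1 else prob (Ren 0 m))"

definition gg :: "nat \<Rightarrow> real" where
  "gg L = prob (NR 0 L)"

lemma DD_prob: "m \<le> N \<Longrightarrow> prob (DD N m) = uu m * gg (N - m)"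
proof (cases "m = 0")
  case True thus ?thesis by (simp add: DD0 uu_def gg_def)
next
  case False
  assume "m \<le> N"
  hence "DD N m = Ren 0 m \<inter> NR m (N - m)" using False by (intro DDm) auto
  thus ?thesis using False by (simp add: Ren_NR_indep uu_def gg_def)
qed

lemma DD_sets: "m \<le> N \<Longrightarrow> DD N m \<in> events"
proof (cases "m = 0")
  case True thus ?thesis by (simp add: DD0 NR_sets)
next
  case False
  assume "m \<le> N"
  hence "DD N m = Ren 0 m \<inter> NR m (N - m)" using False by (intro DDm) auto
  thus ?thesis by (simp add: Ren_sets NR_sets sets.Int)
qed

lemma renewal: "(\<Sum>m\<le>N. uu m * gg (N - m)) = 1"
proof -
  have "prob (\<Union>m\<in>{..N}. DD N m) = (\<Sum>m\<le>N. prob (DD N m))"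
    by (intro finite_measure_finite_Union DD_disj) (auto intro: DD_sets)
  also have "\<dots> = (\<Sum>m\<le>N. uu m * gg (N - m))" by (intro sum.cong) (auto simp: DD_prob)
  finally show ?thesis using DD_cover prob_space by simp
qed

lemma gg_mono: "L \<le> L' \<Longrightarrow> gg L' \<le> gg L"
  unfolding gg_def by (intro finite_measure_mono NR_sets) (auto simp: NR_def)

lemma gg_nonneg: "gg L \<ge> 0" unfolding gg_def by simp
lemma uu_nonneg: "uu m \<ge> 0" unfolding uu_def by simp
lemma uu0: "uu 0 = 1" unfolding uu_def by simp

lemma gg_lim: "gg \<longlonglongrightarrow> prob (no_rencontre M X d)"
proof -
  have "(\<lambda>L. prob (NR 0 L)) \<longlonglongrightarrow> prob (\<Inter>L. NR 0 L)"
  proof (intro finite_Lim_measure_decseq)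
    show "range (NR 0) \<subseteq> events" using NR_sets by auto
    show "decseq (NR 0)" unfolding decseq_def NR_def by auto
  qed
  moreover have "(\<Inter>L. NR 0 L) = no_rencontre M X d"
  proof (intro set_eqI iffI)
    fix \<omega> assume w: "\<omega> \<in> (\<Inter>L. NR 0 L)"
    have "\<omega> \<in> space M" using w unfolding NR_def by blast
    moreover have "\<forall>n\<ge>1. \<omega> \<notin> rencontre M X d n"
    proof (intro allI impI)
      fix n :: nat assume "n \<ge> 1"
      hence "n \<in> {1..n}" by simp
      moreover have "\<omega> \<in> NR 0 n" using w by blast
      ultimately show "\<omega> \<notin> rencontre M X d n" unfolding NR_def Ren_def Xs0 by blast
    qed
    ultimately show "\<omega> \<in> no_rencontre M X d" unfolding no_rencontre_def by blast
  next
    fix \<omega> assume w: "\<omega> \<in> no_rencontre M X d"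
    show "\<omega> \<in> (\<Inter>L. NR 0 L)"
    proof
      fix L
      show "\<omega> \<in> NR 0 L" using w unfolding no_rencontre_def NR_def Ren_def Xs0 by auto
    qed
  qed
  ultimately show ?thesis unfolding gg_def by simp
qed


definition TT :: "nat set \<Rightarrow> nat \<Rightarrow> (nat \<Rightarrow> nat) \<Rightarrow> 'a set" where
  "TT J n c = {\<omega> \<in> space M. \<forall>j\<in>J. partial_sum X j n \<omega> = c j}"

lemma TT_evm: "J \<subseteq> {1..d} \<Longrightarrow> TT J n c = evm 0 (J \<times> {1..n}) (\<lambda>v. \<forall>j\<in>J. psv v 0 j n = c j)"
proof -
  assume J: "J \<subseteq> {1..d}"
  have "\<And>\<omega> j. j \<in> J \<Longrightarrow> psv (restrict (\<lambda>i. Zs 0 i \<omega>) (J \<times> {1..n})) 0 j n = partial_sum (Xs 0) j n \<omega>"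
    by (subst psv_restrict) auto
  thus ?thesis unfolding TT_def evm_def Xs0 by auto
qed

lemma ps_Suc: "partial_sum X j (Suc n) \<omega> = partial_sum X j n \<omega> + of_bool (X j (Suc n) \<omega>)"
  unfolding partial_sum_def by simp

lemma binom_law: "j \<in> {1..d} \<Longrightarrow> prob {\<omega> \<in> space M. partial_sum X j n \<omega> = c} = bn n (p j) c"
proof (induction n arbitrary: c)
  case 0
  thus ?case by (cases "c = 0") (auto simp: partial_sum_def bn_0 prob_space)
next
  case (Suc n)
  note j = Suc.prems
  define B where "B = (\<lambda>c'. {\<omega> \<in> space M. partial_sum X j n \<omega> = c'})"
  define C where "C = (\<lambda>b. {\<omega> \<in> space M. X j (Suc n) \<omega> = b})"
  have B_evm: "B c' = evm 0 ({j} \<times> {1..n}) (\<lambda>v. psv v 0 j n = c')" for c'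
    using TT_evm[of "{j}" n "\<lambda>_. c'"] j unfolding TT_def B_def by simp
  have C_evm: "C b = evm 0 {(j, Suc n)} (\<lambda>v. v (j, Suc n) = b)" for b
    unfolding C_def evm_def Zs_def by auto
  have BC: "prob (B c' \<inter> C b) = bn n (p j) c' * (if b then p j else 1 - p j)" for c' b
  proof -
    have "prob (B c' \<inter> C b) = prob (B c') * prob (C b)"
      unfolding B_evm C_evm using j by (intro evm_indep) auto
    moreover have "C b = X j (Suc n) -` {b} \<inter> space M" unfolding C_def by auto
    ultimately show ?thesis using prob_Xb[OF j, of "Suc n" b] Suc.IH[OF j] unfolding B_def by simp
  qed
  have Bs: "B c' \<in> events" for c' unfolding B_evm using j by (intro evm_sets) auto
  have Cs: "C b \<in> events" for b unfolding C_evm using j by (intro evm_sets) auto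
  show ?case
  proof (cases c)
    case 0
    have "{\<omega> \<in> space M. partial_sum X j (Suc n) \<omega> = c} = B 0 \<inter> C False"
      unfolding B_def C_def 0 ps_Suc by auto
    thus ?thesis using BC[of 0 False] 0 by (simp add: bn_Suc_0)
  next
    case (Suc c')
    have "{\<omega> \<in> space M. partial_sum X j (Suc n) \<omega> = c} = (B c' \<inter> C True) \<union> (B c \<inter> C False)"
      unfolding B_def C_def Suc ps_Suc by auto
    moreover have "(B c' \<inter> C True) \<inter> (B c \<inter> C False) = {}" unfolding C_def by auto
    ultimately have "prob {\<omega> \<in> space M. partial_sum X j (Suc n) \<omega> = c} = prob (B c' \<inter> C True) + prob (B c \<inter> C False)"
      using Bs Cs by (simp add: finite_measure_Union sets.Int)
    thus ?thesis using BC Suc by (simp add: bn_Suc_Suc)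
  qed
qed

lemma TT_prob: "finite J \<Longrightarrow> J \<subseteq> {1..d} \<Longrightarrow> prob (TT J n c) = (\<Prod>j\<in>J. bn n (p j) (c j))"
proof (induction J rule: finite_induct)
  case empty thus ?case by (simp add: TT_def prob_space)
next
  case (insert j J)
  have "TT (insert j J) n c = TT {j} n c \<inter> TT J n c" unfolding TT_def by auto
  moreover have "prob (TT {j} n c \<inter> TT J n c) = prob (TT {j} n c) * prob (TT J n c)"
  proof -
    have s1: "{j} \<subseteq> {1..d}" "J \<subseteq> {1..d}" using insert.prems by auto
    show ?thesis unfolding TT_evm[OF s1(1)] TT_evm[OF s1(2)]
      using insert.hyps s1 by (intro evm_indep) auto
  qed
  ultimately have "prob (TT (insert j J) n c) = prob (TT {j} n c) * prob (TT J n c)" by simp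
  moreover have "prob (TT {j} n c) = bn n (p j) (c j)"
    using binom_law[of j n "c j"] insert.prems unfolding TT_def by simp
  ultimately show ?case using insert by simp
qed

lemma uu_formula: "n \<ge> 1 \<Longrightarrow> uu n = (\<Sum>c\<le>n. \<Prod>j\<in>{1..d}. bn n (p j) c)"
proof -
  assume n: "n \<ge> 1"
  have "Ren 0 n = (\<Union>c\<in>{..n}. TT {1..d} n (\<lambda>_. c))"
  proof (intro set_eqI iffI)
    fix \<omega> assume w: "\<omega> \<in> Ren 0 n"
    have "(\<Sum>i\<in>{1..n}. of_bool (X 1 i \<omega>)::nat) \<le> (\<Sum>i\<in>{1..n}. 1)" by (rule sum_mono) simp
    hence le: "partial_sum X 1 n \<omega> \<le> n" unfolding partial_sum_def by (simp only: sum_constant mult_1_right card_atLeastAtMost diff_Suc_1 of_nat_id)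
    have "\<omega> \<in> TT {1..d} n (\<lambda>_. partial_sum X 1 n \<omega>)"
      using w unfolding Ren_def rencontre_def Xs0 TT_def by blast
    thus "\<omega> \<in> (\<Union>c\<in>{..n}. TT {1..d} n (\<lambda>_. c))"
      using le by blast
  next
    fix \<omega> assume h: "\<omega> \<in> (\<Union>c\<in>{..n}. TT {1..d} n (\<lambda>_. c))"
    have "1 \<in> {1..d}" using d1 by simp
    obtain c where c: "\<omega> \<in> TT {1..d} n (\<lambda>_. c)" using h by blast
    hence "\<forall>j\<in>{1..d}. partial_sum X j n \<omega> = c" "\<omega> \<in> space M" unfolding TT_def by auto
    with \<open>1 \<in> {1..d}\<close> show "\<omega> \<in> Ren 0 n" unfolding Ren_def rencontre_def Xs0 by auto
  qed
  moreover have "prob (\<Union>c\<in>{..n}. TT {1..d} n (\<lambda>_. c)) = (\<Sum>c\<le>n. prob (TT {1..d} n (\<lambda>_. c)))"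
  proof (intro finite_measure_finite_Union)
    show "(\<lambda>c. TT {1..d} n (\<lambda>_. c)) ` {..n} \<subseteq> events"
    proof safe
      fix c show "TT {1..d} n (\<lambda>_. c) \<in> events" unfolding TT_evm[OF order_refl] by (rule evm_sets) auto
    qed
    have "1 \<in> {1..d}" using d1 by simp
    show "disjoint_family_on (\<lambda>c. TT {1..d} n (\<lambda>_. c)) {..n}"
      unfolding disjoint_family_on_def
    proof (intro ballI impI)
      fix a b :: nat assume "a \<noteq> b"
      show "TT {1..d} n (\<lambda>_. a) \<inter> TT {1..d} n (\<lambda>_. b) = {}"
      proof (rule ccontr)
        assume "TT {1..d} n (\<lambda>_. a) \<inter> TT {1..d} n (\<lambda>_. b) \<noteq> {}"
        then obtain \<omega> where "\<omega> \<in> TT {1..d} n (\<lambda>_. a)" "\<omega> \<in> TT {1..d} n (\<lambda>_. b)" by blast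
        hence "partial_sum X 1 n \<omega> = a" "partial_sum X 1 n \<omega> = b" using \<open>1 \<in> {1..d}\<close> unfolding TT_def by auto
        thus False using \<open>a \<noteq> b\<close> by simp
      qed
    qed
  qed simp
  ultimately show ?thesis using n by (simp add: uu_def TT_prob)
qed


end


lemma prod_le_sub:
  fixes f :: "nat \<Rightarrow> real"
  assumes "finite J" "K \<subseteq> J" "\<And>j. j \<in> J \<Longrightarrow> 0 \<le> f j \<and> f j \<le> 1"
  shows "prod f J \<le> prod f K"
proof -
  have "prod f J = prod f (J - K) * prod f K" using assms by (intro prod.subset_diff) auto
  moreover have "prod f (J - K) \<le> 1" using assms by (intro prod_le_1) auto
  moreover have "prod f (J - K) \<ge> 0" using assms by (intro prod_nonneg) auto
  moreover have "prod f K \<ge> 0" using assms by (intro prod_nonneg) auto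
  ultimately show ?thesis using mult_left_le_one_le[of "prod f K" "prod f (J - K)"] by simp
qed

lemma powr_bound: "n \<ge> 1 \<Longrightarrow> (C / sqrt (real n)) ^ 3 = C ^ 3 * real n powr (-3/2)"
proof -
  assume n: "n \<ge> 1"
  have "sqrt (real n) ^ 3 = (real n powr (1/2)) ^ 3" using n by (simp add: powr_half_sqrt)
  also have "\<dots> = real n powr (3/2)" using n by (subst powr_power) auto
  finally have "(C / sqrt (real n)) ^ 3 = C ^ 3 / real n powr (3/2)" by (simp add: power_divide)
  moreover have "real n powr (-3/2) = inverse (real n powr (3/2))"
    using powr_minus[of "real n" "3/2"] by simp
  ultimately show ?thesis by (simp only: divide_inverse)
qed

context rsetup
begin

lemma uu_le1: "uu n \<le> 1"
proof (cases "n = 0")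
  case True thus ?thesis unfolding uu_def by simp
next
  case False
  have "prob (Ren 0 n) \<le> 1" by (rule prob_le_1)
  thus ?thesis unfolding uu_def using False by simp
qed

lemma bnj: "j \<in> {1..d} \<Longrightarrow> 0 \<le> bn n (p j) c \<and> bn n (p j) c \<le> 1"
proof -
  assume "j \<in> {1..d}"
  hence "0 < p j" "p j < 1" using pp by auto
  thus ?thesis by (simp add: bn_nonneg bn_le1)
qed

lemma uu_pair:
  assumes a: "a \<in> {1..d}" and b: "b \<in> {1..d}" and ab: "a \<noteq> b" and n: "n \<ge> 1"
  shows "uu n \<le> (\<Sum>c\<le>n. bn n (p a) c * bn n (p b) c)"
proof -
  have "uu n = (\<Sum>c\<le>n. \<Prod>j\<in>{1..d}. bn n (p j) c)" using n by (rule uu_formula)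
  also have "\<dots> \<le> (\<Sum>c\<le>n. \<Prod>j\<in>{a, b}. bn n (p j) c)"
    using a b bnj by (intro sum_mono prod_le_sub) auto
  also have "\<dots> = (\<Sum>c\<le>n. bn n (p a) c * bn n (p b) c)" using ab by simp
  finally show ?thesis .
qed

lemma summable_pair:
  assumes a: "a \<in> {1..d}" and b: "b \<in> {1..d}" and ab: "p a \<noteq> p b"
  shows "summable uu"
proof -
  have ab': "a \<noteq> b" using ab by auto
  obtain \<rho> where r: "0 \<le> \<rho>" "\<rho> < 1" "\<And>n. (\<Sum>c\<le>n. bn n (p a) c * bn n (p b) c) \<le> \<rho> ^ n"
    using chernoff[of "p a" "p b"] pp a b ab by auto
  have "uu n \<le> \<rho> ^ n" for n
  proof (cases "n = 0")
    case True thus ?thesis by (simp add: uu_def)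
  next
    case False
    thus ?thesis using uu_pair[OF a b ab', of n] r(3)[of n] by simp
  qed
  thus ?thesis using r
    by (intro summable_comparison_test[OF _ summable_geometric[of \<rho>]]) (auto simp: uu_nonneg)
qed

lemma summable_d4:
  assumes d4: "d \<ge> 4"
  shows "summable uu"
proof -
  define C where "C = (\<lambda>j. 4 / sqrt (p j * (1 - p j)))"
  define K where "K = C 2 * C 3 * C 4"
  have Cn: "C j \<ge> 0" if "j \<in> {1..d}" for j
  proof -
    have "0 < p j" "p j < 1" using pp that by auto
    hence "p j * (1 - p j) \<ge> 0" by simp
    thus ?thesis unfolding C_def by simp
  qed
  have bnC: "bn n (p j) c \<le> C j / sqrt (real n)" if "j \<in> {1..d}" "n \<ge> 1" for j n c
    unfolding C_def using bn_unif[of "p j" n c] pp that by auto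
  have jj: "1 \<in> {1..d}" "2 \<in> {1..d}" "3 \<in> {1..d}" "4 \<in> {1..d}" using d4 by auto
  have main: "uu n \<le> K / sqrt (real n) ^ 3" if n: "n \<ge> 1" for n
  proof -
    have "uu n = (\<Sum>c\<le>n. \<Prod>j\<in>{1..d}. bn n (p j) c)" using n by (rule uu_formula)
    also have "\<dots> \<le> (\<Sum>c\<le>n. \<Prod>j\<in>{1,2,3,4}. bn n (p j) c)"
      using jj bnj by (intro sum_mono prod_le_sub) auto
    also have "\<dots> = (\<Sum>c\<le>n. bn n (p 1) c * (bn n (p 2) c * (bn n (p 3) c * bn n (p 4) c)))" by simp
    also have "\<dots> \<le> (\<Sum>c\<le>n. bn n (p 1) c * (C 2 / sqrt (real n) * (C 3 / sqrt (real n) * (C 4 / sqrt (real n)))))"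
    proof (intro sum_mono mult_left_mono mult_mono)
      fix c
      show "bn n (p 2) c \<le> C 2 / sqrt (real n)" "bn n (p 3) c \<le> C 3 / sqrt (real n)"
           "bn n (p 4) c \<le> C 4 / sqrt (real n)" using bnC jj n by auto
      show "0 \<le> C 2 / sqrt (real n)" "0 \<le> C 3 / sqrt (real n)" using Cn jj by auto
      show "0 \<le> bn n (p 3) c * bn n (p 4) c" "0 \<le> bn n (p 4) c" "0 \<le> bn n (p 1) c"
        using bnj jj by auto
    qed
    also have "\<dots> = (\<Sum>c\<le>n. bn n (p 1) c) * (C 2 / sqrt (real n) * (C 3 / sqrt (real n) * (C 4 / sqrt (real n))))"
      by (simp only: sum_distrib_right)
    also have "\<dots> = (\<Sum>c\<le>n. bn n (p 1) c) * (K / sqrt (real n) ^ 3)"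
      unfolding K_def by (simp add: power3_eq_cube mult_ac)
    also have "\<dots> \<le> 1 * (K / sqrt (real n) ^ 3)"
    proof (rule mult_right_mono)
      show "(\<Sum>c\<le>n. bn n (p 1) c) \<le> 1" using bn_sum_all by simp
      show "0 \<le> K / sqrt (real n) ^ 3" unfolding K_def using Cn jj by auto
    qed
    finally show ?thesis by simp
  qed
  have "K / sqrt (real n) ^ 3 = K * real n powr (-3/2)" if "n \<ge> 1" for n
  proof -
    have "real n powr (-3/2) = 1 / sqrt (real n) ^ 3" using powr_bound[OF that, of 1] by (simp add: power_one_over)
    thus ?thesis by simp
  qed
  hence ev: "eventually (\<lambda>n. norm (uu n) \<le> K * real n powr (-3/2)) sequentially"
    using main uu_nonneg unfolding eventually_sequentially by (intro exI[of _ 1]) auto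
  have "summable (\<lambda>n. real n powr (-3/2))" by (subst summable_real_powr_iff) simp
  hence "summable (\<lambda>n. K * real n powr (-3/2))" by (rule summable_mult)
  thus ?thesis by (rule summable_comparison_test_ev[OF ev])
qed

lemma not_summable_eq3:
  assumes d3: "d = 3" and eq: "p 1 = p 2" "p 2 = p 3"
  shows "\<not> summable uu"
proof
  assume su: "summable uu"
  have p: "0 < p 1" "p 1 < 1" using pp d3 by auto
  have "uu n \<ge> 1 / (72 * real n)" if n: "n \<ge> 1" for n
  proof -
    have "uu n = (\<Sum>c\<le>n. \<Prod>j\<in>{1..d}. bn n (p j) c)" using n by (rule uu_formula)
    also have "{1..d} = {1,2,3::nat}" using d3 by auto
    also have "(\<Sum>c\<le>n. \<Prod>j\<in>{1,2,3}. bn n (p j) c) = (\<Sum>c\<le>n. bn n (p 1) c ^ 3)"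
      using eq by (simp add: power3_eq_cube mult_ac)
    finally show ?thesis using bn_cube_lower[OF p n] by simp
  qed
  hence "\<forall>n. norm (inverse (real n) / 72) \<le> uu n"
  proof (intro allI)
    fix n
    assume h: "\<And>n. n \<ge> 1 \<Longrightarrow> uu n \<ge> 1 / (72 * real n)"
    show "norm (inverse (real n) / 72) \<le> uu n"
    proof (cases "n = 0")
      case True thus ?thesis by (simp add: uu_def)
    next
      case False
      hence "uu n \<ge> 1 / (72 * real n)" using h by simp
      moreover have "norm (inverse (real n) / 72) = 1 / (72 * real n)" by (simp add: field_simps)
      ultimately show ?thesis by simp
    qed
  qed
  hence "summable (\<lambda>n. inverse (real n) / 72)"
    by (intro summable_comparison_test[OF _ su]) auto
  hence "summable (\<lambda>n. 72 * (inverse (real n) / 72))" by (rule summable_mult)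
  hence "summable (\<lambda>n. inverse (real n))" by simp
  thus False using not_summable_harmonic by blast
qed

lemma phi_eq: "phi M X d = (\<lambda>x. \<Sum>n. uu (Suc n) * x ^ Suc n)"
  unfolding phi_def uu_def Ren_def Xs0 by simp

lemma summable_shift: "summable (\<lambda>n. uu (Suc n)) = summable uu"
  by (rule summable_Suc_iff)

lemma final_rec: "\<not> summable uu \<Longrightarrow> filterlim (phi M X d) at_top (at_left 1) \<and> prob (no_rencontre M X d) = 0"
proof
  assume ns: "\<not> summable uu"
  show "filterlim (phi M X d) at_top (at_left 1)"
    unfolding phi_eq using ns by (intro gen_div) (auto simp: summable_shift uu_nonneg uu_le1)
  show "prob (no_rencontre M X d) = 0"
    by (rule recurrent_case[OF uu_nonneg gg_nonneg gg_mono renewal gg_lim ns])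
qed

lemma final_tr: "summable uu \<Longrightarrow> (\<exists>L. (phi M X d \<longlongrightarrow> L) (at_left 1)) \<and> prob (no_rencontre M X d) > 0"
proof
  assume su: "summable uu"
  show "\<exists>L. (phi M X d \<longlongrightarrow> L) (at_left 1)"
    unfolding phi_eq using su by (intro gen_conv) (auto simp: summable_shift uu_nonneg)
  show "prob (no_rencontre M X d) > 0"
    by (rule transient_case[OF uu_nonneg gg_nonneg _ gg_mono renewal gg_lim su]) (simp add: gg_def)
qed

end

theorem theorem9:
  fixes M :: "'a measure" and X :: "nat \<Rightarrow> nat \<Rightarrow> 'a \<Rightarrow> bool"
    and p :: "nat \<Rightarrow> real" and d :: nat
  assumes "prob_space M"
    and "d \<ge> 3"
    and "\<forall>j\<in>{1..d}. 0 < p j \<and> p j < 1"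
    and "prob_space.indep_vars M (\<lambda>_. count_space UNIV) (\<lambda>(j, k). X j k) ({1..d} \<times> {1..})"
    and "\<forall>j\<in>{1..d}. \<forall>k\<ge>1. measure M {\<omega> \<in> space M. X j k \<omega>} = p j"
  shows "(d = 3 \<longrightarrow>
            ((p 1 = p 2 \<and> p 2 = p 3) \<longrightarrow>
               filterlim (phi M X d) at_top (at_left 1) \<and> measure M (no_rencontre M X d) = 0) \<and>
            (\<not> (p 1 = p 2 \<and> p 2 = p 3) \<longrightarrow>
               (\<exists>L. (phi M X d \<longlongrightarrow> L) (at_left 1)) \<and> measure M (no_rencontre M X d) > 0))
       \<and> (d \<ge> 4 \<longrightarrow>
            (\<exists>L. (phi M X d \<longlongrightarrow> L) (at_left 1)) \<and> measure M (no_rencontre M X d) > 0)"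
proof -
  have d1: "d \<ge> 1" using assms(2) by simp
  interpret rsetup M X p d
    by (rule rsetup.intro[OF assms(1) rsetup_axioms.intro[OF d1 assms(3) assms(4) assms(5)]])
  have A: "d = 3 \<Longrightarrow> p 1 = p 2 \<and> p 2 = p 3 \<Longrightarrow>
      filterlim (phi M X d) at_top (at_left 1) \<and> measure M (no_rencontre M X d) = 0"
    using final_rec not_summable_eq3 by blast
  have B: "d = 3 \<Longrightarrow> \<not> (p 1 = p 2 \<and> p 2 = p 3) \<Longrightarrow>
      (\<exists>L. (phi M X d \<longlongrightarrow> L) (at_left 1)) \<and> measure M (no_rencontre M X d) > 0"
  proof -
    assume d3: "d = 3" and ne: "\<not> (p 1 = p 2 \<and> p 2 = p 3)"
    have "summable uu"
    proof (cases "p 1 = p 2")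
      case False thus ?thesis using d3 by (intro summable_pair[of 1 2]) auto
    next
      case True
      hence "p 2 \<noteq> p 3" using ne by simp
      thus ?thesis using d3 by (intro summable_pair[of 2 3]) auto
    qed
    thus ?thesis by (rule final_tr)
  qed
  have C: "d \<ge> 4 \<Longrightarrow> (\<exists>L. (phi M X d \<longlongrightarrow> L) (at_left 1)) \<and> measure M (no_rencontre M X d) > 0"
    using final_tr summable_d4 by blast
  show ?thesis using A B C by blast
qed


end
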